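(* Let $\mathcal K$ be a 2-category which admits Eilenberg–Moore constructions for monads and in which idempotent 2-cells split. Let $\varrho:(V,\psi)\Rightarrow(W,\phi)$ be a 2-cell in $\mathrm{EM}^w(\mathcal K)$ between 1-cells $(t,\mu,\eta)\to(t',\mu',\eta')$. For $X\in\{V,W\}$ with structure 2-cell $\chi\in\{\psi,\phi\}$, let $Xv\overset{\pi}{\Rightarrow}\widetilde X\overset{\iota}{\Rightarrow}Xv$ be the chosen splitting of the idempotent $Xv\epsilon\ast\chi v\ast\eta'Xv$, and let $\widetilde\psi:=\pi\ast Vv\epsilon\ast\psi v\ast t'\iota$, $\widetilde\phi:=\pi\ast Wv\epsilon\ast\phi v\ast t'\iota$. Then $\widetilde\varrho:=\pi\ast Wv\epsilon\ast\varrho v\ast\iota:\widetilde V\Rightarrow\widetilde W$ is a 2-cell $(\widetilde V,\widetilde\psi)\Rightarrow(\widetilde W,\widetilde\phi)$ in $\mathrm{EM}(\mathcal K)$, i.e. $\widetilde\varrho\ast\widetilde\psi=\widetilde\phi\ast t'\widetilde\varrho$.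
   Context: Conventions in a 2-category $\mathcal K$: horizontal composition and whiskering by juxtaposition in the order of functor composition; identity 1-cell of $k$ written $k$, identity 2-cell of $V$ written $V$; vertical composition $\ast$ with $\alpha\ast\beta$ meaning $\beta$ then $\alpha$. A monad $(t,\mu,\eta)$ on $k$: $t:k\to k$, $\mu:tt\Rightarrow t$, $\eta:k\Rightarrow t$, associative and unital. $\mathrm{EM}^w(\mathcal K)$: a 1-cell $(t,\mu,\eta)\to(t',\mu',\eta')$ ($t$ on $k$, $t'$ on $k'$) is $(V,\psi)$, $V:k\to k'$, $\psi:t'V\Rightarrow Vt$, with $V\mu\ast\psi t\ast t'\psi=\psi\ast\mu'V$; a 2-cell $(V,\psi)\Rightarrow(W,\phi)$ is $\varrho:V\Rightarrow Wt$ with $W\mu\ast\varrho t\ast\psi=W\mu\ast\phi t\ast t'\varrho$ and $\varrho=W\mu\ast\phi t\ast\eta'Wt\ast\varrho$. In the Lack–Street 2-category $\mathrm{EM}(\mathcal K)$, 1-cells from an identity monad $I(l)$ to $t'$ are pairs $(A,\alpha:t'A\Rightarrow A)$ ($t'$-algebras) and 2-cells $(A,\alpha)\Rightarrow(B,\beta)$ are $\rho:A\Rightarrow B$ with $\beta\ast t'\rho=\rho\ast\alpha$. $\mathcal K$ admits Eilenberg–Moore constructions for monads: the inclusion $I:\mathcal K\to\mathrm{EM}(\mathcal K)$ has a right 2-adjoint $J$; each monad $(t,\mu,\eta)$ on $k$ gives an adjunction $f\dashv v$, $f:k\to J(t)$, $v:J(t)\to k$, unit $\eta$, counit $\epsilon:fv\Rightarrow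 J(t)$, with $t=vf$, $\mu=v\epsilon f$; for $t'$: $f',v',\eta',\epsilon'$. Idempotent 2-cells split (every idempotent $e$ factors as $e=\iota\ast\pi$ with $\pi\ast\iota$ an identity). For a 1-cell $(X,\chi)$ of $\mathrm{EM}^w(\mathcal K)$, $Xv\epsilon\ast\chi v\ast\eta'Xv$ is idempotent, and $(\widetilde X,\widetilde\chi)$ is a $t'$-algebra on $\widetilde X:J(t)\to k'$. *)

theory Defs
  imports Main
begin

text \<open>Composition is written in the order of functor composition:
comp1 g f is "g after f" (juxtaposition g f); hcomp a b is the horizontal composite
(juxtaposition a b); vcomp a b is a * b, i.e. b first, then a.\<close>

record ('o, 'm, 'c) twocat =
  obj   :: "'o set"
  arr1  :: "'m set"
  src1  :: "'m \<Rightarrow> 'o"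
  tgt1  :: "'m \<Rightarrow> 'o"
  arr2  :: "'c set"
  dom2  :: "'c \<Rightarrow> 'm"
  cod2  :: "'c \<Rightarrow> 'm"
  id1   :: "'o \<Rightarrow> 'm"
  comp1 :: "'m \<Rightarrow> 'm \<Rightarrow> 'm"
  id2   :: "'m \<Rightarrow> 'c"
  vcomp :: "'c \<Rightarrow> 'c \<Rightarrow> 'c"
  hcomp :: "'c \<Rightarrow> 'c \<Rightarrow> 'c"

definition hom1 :: "('o,'m,'c) twocat \<Rightarrow> 'm \<Rightarrow> 'o \<Rightarrow> 'o \<Rightarrow> bool" where
  "hom1 K x a b \<longleftrightarrow> x \<in> arr1 K \<and> src1 K x = a \<and> tgt1 K x = b"

definition hom2 :: "('o,'m,'c) twocat \<Rightarrow> 'c \<Rightarrow> 'm \<Rightarrow> 'm \<Rightarrow> bool" where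
  "hom2 K \<alpha> x y \<longleftrightarrow> \<alpha> \<in> arr2 K \<and> dom2 K \<alpha> = x \<and> cod2 K \<alpha> = y"

definition two_category :: "('o,'m,'c) twocat \<Rightarrow> bool" where
  "two_category K \<longleftrightarrow>
    \<comment> \<open>1-cells\<close>
    (\<forall>x\<in>arr1 K. src1 K x \<in> obj K \<and> tgt1 K x \<in> obj K) \<and>
    (\<forall>a\<in>obj K. hom1 K (id1 K a) a a) \<and>
    (\<forall>f\<in>arr1 K. \<forall>g\<in>arr1 K. src1 K g = tgt1 K f \<longrightarrow>
        hom1 K (comp1 K g f) (src1 K f) (tgt1 K g)) \<and>
    (\<forall>f\<in>arr1 K. \<forall>g\<in>arr1 K. \<forall>h\<in>arr1 K. src1 K h = tgt1 K g \<longrightarrow> src1 K g = tgt1 K f \<longrightarrow>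
        comp1 K h (comp1 K g f) = comp1 K (comp1 K h g) f) \<and>
    (\<forall>f\<in>arr1 K. comp1 K (id1 K (tgt1 K f)) f = f \<and> comp1 K f (id1 K (src1 K f)) = f) \<and>
    \<comment> \<open>2-cells\<close>
    (\<forall>\<alpha>\<in>arr2 K. dom2 K \<alpha> \<in> arr1 K \<and> cod2 K \<alpha> \<in> arr1 K \<and>
        src1 K (dom2 K \<alpha>) = src1 K (cod2 K \<alpha>) \<and> tgt1 K (dom2 K \<alpha>) = tgt1 K (cod2 K \<alpha>)) \<and>
    (\<forall>x\<in>arr1 K. hom2 K (id2 K x) x x) \<and>
    \<comment> \<open>vertical composition\<close>
    (\<forall>\<alpha>\<in>arr2 K. \<forall>\<beta>\<in>arr2 K. dom2 K \<alpha> = cod2 K \<beta> \<longrightarrow>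
        hom2 K (vcomp K \<alpha> \<beta>) (dom2 K \<beta>) (cod2 K \<alpha>)) \<and>
    (\<forall>\<alpha>\<in>arr2 K. \<forall>\<beta>\<in>arr2 K. \<forall>\<gamma>\<in>arr2 K. dom2 K \<alpha> = cod2 K \<beta> \<longrightarrow> dom2 K \<beta> = cod2 K \<gamma> \<longrightarrow>
        vcomp K \<alpha> (vcomp K \<beta> \<gamma>) = vcomp K (vcomp K \<alpha> \<beta>) \<gamma>) \<and>
    (\<forall>\<alpha>\<in>arr2 K. vcomp K (id2 K (cod2 K \<alpha>)) \<alpha> = \<alpha> \<and> vcomp K \<alpha> (id2 K (dom2 K \<alpha>)) = \<alpha>) \<and>
    \<comment> \<open>horizontal composition\<close>
    (\<forall>\<alpha>\<in>arr2 K. \<forall>\<beta>\<in>arr2 K. src1 K (dom2 K \<alpha>) = tgt1 K (dom2 K \<beta>) \<longrightarrow>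
        hom2 K (hcomp K \<alpha> \<beta>) (comp1 K (dom2 K \<alpha>) (dom2 K \<beta>)) (comp1 K (cod2 K \<alpha>) (cod2 K \<beta>))) \<and>
    (\<forall>\<alpha>\<in>arr2 K. \<forall>\<beta>\<in>arr2 K. \<forall>\<gamma>\<in>arr2 K.
        src1 K (dom2 K \<alpha>) = tgt1 K (dom2 K \<beta>) \<longrightarrow> src1 K (dom2 K \<beta>) = tgt1 K (dom2 K \<gamma>) \<longrightarrow>
        hcomp K \<alpha> (hcomp K \<beta> \<gamma>) = hcomp K (hcomp K \<alpha> \<beta>) \<gamma>) \<and>
    (\<forall>\<alpha>\<in>arr2 K. hcomp K (id2 K (id1 K (tgt1 K (dom2 K \<alpha>)))) \<alpha> = \<alpha> \<and>
                 hcomp K \<alpha> (id2 K (id1 K (src1 K (dom2 K \<alpha>)))) = \<alpha>) \<and>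
    (\<forall>f\<in>arr1 K. \<forall>g\<in>arr1 K. src1 K g = tgt1 K f \<longrightarrow>
        hcomp K (id2 K g) (id2 K f) = id2 K (comp1 K g f)) \<and>
    \<comment> \<open>interchange law\<close>
    (\<forall>\<alpha>\<in>arr2 K. \<forall>\<beta>\<in>arr2 K. \<forall>\<gamma>\<in>arr2 K. \<forall>\<delta>\<in>arr2 K.
        dom2 K \<alpha> = cod2 K \<beta> \<longrightarrow> dom2 K \<gamma> = cod2 K \<delta> \<longrightarrow> src1 K (dom2 K \<alpha>) = tgt1 K (dom2 K \<gamma>) \<longrightarrow>
        vcomp K (hcomp K \<alpha> \<gamma>) (hcomp K \<beta> \<delta>) = hcomp K (vcomp K \<alpha> \<beta>) (vcomp K \<gamma> \<delta>))"

text \<open>Whiskering: wr K \<alpha> x is the 2-cell \<alpha>x, wl K x \<alpha> is x\<alpha>.\<close>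

definition wr :: "('o,'m,'c) twocat \<Rightarrow> 'c \<Rightarrow> 'm \<Rightarrow> 'c" where
  "wr K \<alpha> x = hcomp K \<alpha> (id2 K x)"

definition wl :: "('o,'m,'c) twocat \<Rightarrow> 'm \<Rightarrow> 'c \<Rightarrow> 'c" where
  "wl K x \<alpha> = hcomp K (id2 K x) \<alpha>"

definition idempotents_split :: "('o,'m,'c) twocat \<Rightarrow> bool" where
  "idempotents_split K \<longleftrightarrow>
    (\<forall>e\<in>arr2 K. dom2 K e = cod2 K e \<and> vcomp K e e = e \<longrightarrow>
      (\<exists>X \<pi> \<iota>. hom2 K \<pi> (dom2 K e) X \<and> hom2 K \<iota> X (dom2 K e) \<and>
               e = vcomp K \<iota> \<pi> \<and> vcomp K \<pi> \<iota> = id2 K X))"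

definition monad :: "('o,'m,'c) twocat \<Rightarrow> 'o \<Rightarrow> 'm \<Rightarrow> 'c \<Rightarrow> 'c \<Rightarrow> bool" where
  "monad K k t \<mu> \<eta> \<longleftrightarrow> k \<in> obj K \<and> hom1 K t k k \<and>
     hom2 K \<mu> (comp1 K t t) t \<and> hom2 K \<eta> (id1 K k) t \<and>
     vcomp K \<mu> (wr K \<mu> t) = vcomp K \<mu> (wl K t \<mu>) \<and>
     vcomp K \<mu> (wr K \<eta> t) = id2 K t \<and> vcomp K \<mu> (wl K t \<eta>) = id2 K t"

text \<open>A t-algebra (A, \<alpha>) with A : l \<rightarrow> k, i.e. a 1-cell I(l) \<rightarrow> t in EM(K).\<close>

definition algebra :: "('o,'m,'c) twocat \<Rightarrow> 'o \<Rightarrow> 'm \<Rightarrow> 'c \<Rightarrow> 'c \<Rightarrow> 'o \<Rightarrow> 'm \<Rightarrow> 'c \<Rightarrow> bool" where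
  "algebra K k t \<mu> \<eta> l A \<alpha> \<longleftrightarrow> l \<in> obj K \<and> hom1 K A l k \<and> hom2 K \<alpha> (comp1 K t A) A \<and>
     vcomp K \<alpha> (wr K \<eta> A) = id2 K A \<and>
     vcomp K \<alpha> (wr K \<mu> A) = vcomp K \<alpha> (wl K t \<alpha>)"

text \<open>A 2-cell (A, \<alpha>) \<Rightarrow> (B, \<beta>) in EM(K) between 1-cells I(l) \<rightarrow> t.\<close>

definition em_2cell :: "('o,'m,'c) twocat \<Rightarrow> 'm \<Rightarrow> 'm \<Rightarrow> 'c \<Rightarrow> 'm \<Rightarrow> 'c \<Rightarrow> 'c \<Rightarrow> bool" where
  "em_2cell K t A \<alpha> B \<beta> \<rho> \<longleftrightarrow> hom2 K \<rho> A B \<and> vcomp K \<beta> (wl K t \<rho>) = vcomp K \<rho> \<alpha>"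

text \<open>Eilenberg-Moore object of the monad t on k: object E with f : k \<rightarrow> E, v : E \<rightarrow> k,
adjunction f \<stileturn> v with unit \<eta> and counit \<epsilon>, t = v f, \<mu> = v\<epsilon>f, and (v, v\<epsilon>) is the
universal t-algebra (composition with it is an isomorphism of hom-categories
K(l, E) \<cong> EM(K)(I(l), t) for every object l), i.e. E = J(t) for the right 2-adjoint J.\<close>

definition em_object :: "('o,'m,'c) twocat \<Rightarrow> 'o \<Rightarrow> 'm \<Rightarrow> 'c \<Rightarrow> 'c \<Rightarrow> 'o \<Rightarrow> 'm \<Rightarrow> 'm \<Rightarrow> 'c \<Rightarrow> bool" where
  "em_object K k t \<mu> \<eta> E f v \<epsilon> \<longleftrightarrow>
     E \<in> obj K \<and> hom1 K f k E \<and> hom1 K v E k \<and> hom2 K \<epsilon> (comp1 K f v) (id1 K E) \<and>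
     comp1 K v f = t \<and> wr K (wl K v \<epsilon>) f = \<mu> \<and>
     vcomp K (wr K \<epsilon> f) (wl K f \<eta>) = id2 K f \<and>
     vcomp K (wl K v \<epsilon>) (wr K \<eta> v) = id2 K v \<and>
     (\<forall>l A \<alpha>. algebra K k t \<mu> \<eta> l A \<alpha> \<longrightarrow>
        (\<exists>!g. hom1 K g l E \<and> comp1 K v g = A \<and> wr K (wl K v \<epsilon>) g = \<alpha>)) \<and>
     (\<forall>l g h \<rho>. l \<in> obj K \<and> hom1 K g l E \<and> hom1 K h l E \<and>
        em_2cell K t (comp1 K v g) (wr K (wl K v \<epsilon>) g) (comp1 K v h) (wr K (wl K v \<epsilon>) h) \<rho> \<longrightarrow>
        (\<exists>!\<sigma>. hom2 K \<sigma> g h \<and> wl K v \<sigma> = \<rho>))"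

definition admits_EM :: "('o,'m,'c) twocat \<Rightarrow> bool" where
  "admits_EM K \<longleftrightarrow> (\<forall>k t \<mu> \<eta>. monad K k t \<mu> \<eta> \<longrightarrow> (\<exists>E f v \<epsilon>. em_object K k t \<mu> \<eta> E f v \<epsilon>))"

definition emw_1cell :: "('o,'m,'c) twocat \<Rightarrow> 'o \<Rightarrow> 'm \<Rightarrow> 'c \<Rightarrow> 'o \<Rightarrow> 'm \<Rightarrow> 'c \<Rightarrow> 'm \<Rightarrow> 'c \<Rightarrow> bool" where
  "emw_1cell K k t \<mu> k' t' \<mu>' V \<psi> \<longleftrightarrow> hom1 K V k k' \<and> hom2 K \<psi> (comp1 K t' V) (comp1 K V t) \<and>
     vcomp K (wl K V \<mu>) (vcomp K (wr K \<psi> t) (wl K t' \<psi>)) = vcomp K \<psi> (wr K \<mu>' V)"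

definition emw_2cell :: "('o,'m,'c) twocat \<Rightarrow> 'm \<Rightarrow> 'c \<Rightarrow> 'm \<Rightarrow> 'c \<Rightarrow> 'm \<Rightarrow> 'c \<Rightarrow> 'm \<Rightarrow> 'c \<Rightarrow> 'c \<Rightarrow> bool" where
  "emw_2cell K t \<mu> t' \<eta>' V \<psi> W \<phi> \<rho> \<longleftrightarrow> hom2 K \<rho> V (comp1 K W t) \<and>
     vcomp K (wl K W \<mu>) (vcomp K (wr K \<rho> t) \<psi>) =
       vcomp K (wl K W \<mu>) (vcomp K (wr K \<phi> t) (wl K t' \<rho>)) \<and>
     \<rho> = vcomp K (wl K W \<mu>) (vcomp K (wr K \<phi> t) (vcomp K (wr K \<eta>' (comp1 K W t)) \<rho>))"

definition tilde_idem :: "('o,'m,'c) twocat \<Rightarrow> 'c \<Rightarrow> 'm \<Rightarrow> 'c \<Rightarrow> 'm \<Rightarrow> 'c \<Rightarrow> 'c" where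
  "tilde_idem K \<eta>' v \<epsilon> X \<chi> =
     vcomp K (wl K (comp1 K X v) \<epsilon>) (vcomp K (wr K \<chi> v) (wr K \<eta>' (comp1 K X v)))"

end

theory Submission
  imports Defs
begin

locale tc =
  fixes K :: "('o,'m,'c) twocat"
  assumes tc: "two_category K"
begin

lemma arr1_src[simp]: "x \<in> arr1 K \<Longrightarrow> src1 K x \<in> obj K"
  using tc[unfolded two_category_def] by (elim conjE) blast
lemma arr1_tgt[simp]: "x \<in> arr1 K \<Longrightarrow> tgt1 K x \<in> obj K"
  using tc[unfolded two_category_def] by (elim conjE) blast
lemma id1_arr[simp]: "a \<in> obj K \<Longrightarrow> id1 K a \<in> arr1 K"
  using tc[unfolded two_category_def hom1_def] by (elim conjE) blast
lemma id1_src[simp]: "a \<in> obj K \<Longrightarrow> src1 K (id1 K a) = a"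
  using tc[unfolded two_category_def hom1_def] by (elim conjE) blast
lemma id1_tgt[simp]: "a \<in> obj K \<Longrightarrow> tgt1 K (id1 K a) = a"
  using tc[unfolded two_category_def hom1_def] by (elim conjE) blast
lemma comp1_arr[simp]: "f \<in> arr1 K \<Longrightarrow> g \<in> arr1 K \<Longrightarrow> src1 K g = tgt1 K f \<Longrightarrow> comp1 K g f \<in> arr1 K"
  using tc[unfolded two_category_def hom1_def] by (elim conjE) blast
lemma comp1_src[simp]: "f \<in> arr1 K \<Longrightarrow> g \<in> arr1 K \<Longrightarrow> src1 K g = tgt1 K f \<Longrightarrow> src1 K (comp1 K g f) = src1 K f"
  using tc[unfolded two_category_def hom1_def] by (elim conjE) blast
lemma comp1_tgt[simp]: "f \<in> arr1 K \<Longrightarrow> g \<in> arr1 K \<Longrightarrow> src1 K g = tgt1 K f \<Longrightarrow> tgt1 K (comp1 K g f) = tgt1 K g"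
  using tc[unfolded two_category_def hom1_def] by (elim conjE) blast
lemma comp1_assoc[simp]: "f \<in> arr1 K \<Longrightarrow> g \<in> arr1 K \<Longrightarrow> h \<in> arr1 K \<Longrightarrow> src1 K h = tgt1 K g \<Longrightarrow> src1 K g = tgt1 K f \<Longrightarrow>
   comp1 K (comp1 K h g) f = comp1 K h (comp1 K g f)"
  using tc[unfolded two_category_def] by (elim conjE) (blast intro: sym)
lemma comp1_idl[simp]: "f \<in> arr1 K \<Longrightarrow> a = tgt1 K f \<Longrightarrow> comp1 K (id1 K a) f = f"
  using tc[unfolded two_category_def] by (elim conjE) blast
lemma comp1_idr[simp]: "f \<in> arr1 K \<Longrightarrow> a = src1 K f \<Longrightarrow> comp1 K f (id1 K a) = f"
  using tc[unfolded two_category_def] by (elim conjE) blast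

lemma dom2_arr[simp]: "\<alpha> \<in> arr2 K \<Longrightarrow> dom2 K \<alpha> \<in> arr1 K"
  using tc[unfolded two_category_def] by (elim conjE) blast
lemma cod2_arr[simp]: "\<alpha> \<in> arr2 K \<Longrightarrow> cod2 K \<alpha> \<in> arr1 K"
  using tc[unfolded two_category_def] by (elim conjE) blast
lemma src_cod[simp]: "\<alpha> \<in> arr2 K \<Longrightarrow> src1 K (cod2 K \<alpha>) = src1 K (dom2 K \<alpha>)"
  using tc[unfolded two_category_def] by (elim conjE) (blast intro: sym)
lemma tgt_cod[simp]: "\<alpha> \<in> arr2 K \<Longrightarrow> tgt1 K (cod2 K \<alpha>) = tgt1 K (dom2 K \<alpha>)"
  using tc[unfolded two_category_def] by (elim conjE) (blast intro: sym)
lemma id2_arr[simp]: "x \<in> arr1 K \<Longrightarrow> id2 K x \<in> arr2 K"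
  using tc[unfolded two_category_def hom2_def] by (elim conjE) blast
lemma id2_dom[simp]: "x \<in> arr1 K \<Longrightarrow> dom2 K (id2 K x) = x"
  using tc[unfolded two_category_def hom2_def] by (elim conjE) blast
lemma id2_cod[simp]: "x \<in> arr1 K \<Longrightarrow> cod2 K (id2 K x) = x"
  using tc[unfolded two_category_def hom2_def] by (elim conjE) blast
lemma vcomp_arr[simp]: "\<alpha> \<in> arr2 K \<Longrightarrow> \<beta> \<in> arr2 K \<Longrightarrow> dom2 K \<alpha> = cod2 K \<beta> \<Longrightarrow> vcomp K \<alpha> \<beta> \<in> arr2 K"
  using tc[unfolded two_category_def hom2_def] by (elim conjE) blast
lemma vcomp_dom[simp]: "\<alpha> \<in> arr2 K \<Longrightarrow> \<beta> \<in> arr2 K \<Longrightarrow> dom2 K \<alpha> = cod2 K \<beta> \<Longrightarrow> dom2 K (vcomp K \<alpha> \<beta>) = dom2 K \<beta>"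
  using tc[unfolded two_category_def hom2_def] by (elim conjE) blast
lemma vcomp_cod[simp]: "\<alpha> \<in> arr2 K \<Longrightarrow> \<beta> \<in> arr2 K \<Longrightarrow> dom2 K \<alpha> = cod2 K \<beta> \<Longrightarrow> cod2 K (vcomp K \<alpha> \<beta>) = cod2 K \<alpha>"
  using tc[unfolded two_category_def hom2_def] by (elim conjE) blast
lemma hcomp_arr[simp]: "\<alpha> \<in> arr2 K \<Longrightarrow> \<beta> \<in> arr2 K \<Longrightarrow> src1 K (dom2 K \<alpha>) = tgt1 K (dom2 K \<beta>) \<Longrightarrow> hcomp K \<alpha> \<beta> \<in> arr2 K"
  using tc[unfolded two_category_def hom2_def] by (elim conjE) blast
lemma hcomp_dom[simp]: "\<alpha> \<in> arr2 K \<Longrightarrow> \<beta> \<in> arr2 K \<Longrightarrow> src1 K (dom2 K \<alpha>) = tgt1 K (dom2 K \<beta>) \<Longrightarrow> dom2 K (hcomp K \<alpha> \<beta>) = comp1 K (dom2 K \<alpha>) (dom2 K \<beta>)"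
  using tc[unfolded two_category_def hom2_def] by (elim conjE) blast
lemma hcomp_cod[simp]: "\<alpha> \<in> arr2 K \<Longrightarrow> \<beta> \<in> arr2 K \<Longrightarrow> src1 K (dom2 K \<alpha>) = tgt1 K (dom2 K \<beta>) \<Longrightarrow> cod2 K (hcomp K \<alpha> \<beta>) = comp1 K (cod2 K \<alpha>) (cod2 K \<beta>)"
  using tc[unfolded two_category_def hom2_def] by (elim conjE) blast

lemma vassoc: "\<alpha> \<in> arr2 K \<Longrightarrow> \<beta> \<in> arr2 K \<Longrightarrow> \<gamma> \<in> arr2 K \<Longrightarrow> dom2 K \<alpha> = cod2 K \<beta> \<Longrightarrow> dom2 K \<beta> = cod2 K \<gamma> \<Longrightarrow>
  vcomp K (vcomp K \<alpha> \<beta>) \<gamma> = vcomp K \<alpha> (vcomp K \<beta> \<gamma>)"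
  using tc[unfolded two_category_def] by (elim conjE) (blast intro: sym)
lemma vid_l: "\<alpha> \<in> arr2 K \<Longrightarrow> y = cod2 K \<alpha> \<Longrightarrow> vcomp K (id2 K y) \<alpha> = \<alpha>"
  using tc[unfolded two_category_def] by (elim conjE) blast
lemma vid_r: "\<alpha> \<in> arr2 K \<Longrightarrow> y = dom2 K \<alpha> \<Longrightarrow> vcomp K \<alpha> (id2 K y) = \<alpha>"
  using tc[unfolded two_category_def] by (elim conjE) blast
lemma hassoc: "\<alpha> \<in> arr2 K \<Longrightarrow> \<beta> \<in> arr2 K \<Longrightarrow> \<gamma> \<in> arr2 K \<Longrightarrow>
   src1 K (dom2 K \<alpha>) = tgt1 K (dom2 K \<beta>) \<Longrightarrow> src1 K (dom2 K \<beta>) = tgt1 K (dom2 K \<gamma>) \<Longrightarrow>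
   hcomp K (hcomp K \<alpha> \<beta>) \<gamma> = hcomp K \<alpha> (hcomp K \<beta> \<gamma>)"
  using tc[unfolded two_category_def, THEN conjunct2, THEN conjunct2, THEN conjunct2, THEN conjunct2, THEN conjunct2, THEN conjunct2, THEN conjunct2, THEN conjunct2, THEN conjunct2, THEN conjunct2, THEN conjunct2, THEN conjunct1] by (metis (no_types, lifting))
lemma hid_l: "\<alpha> \<in> arr2 K \<Longrightarrow> a = tgt1 K (dom2 K \<alpha>) \<Longrightarrow> hcomp K (id2 K (id1 K a)) \<alpha> = \<alpha>"
  using tc[unfolded two_category_def, THEN conjunct2, THEN conjunct2, THEN conjunct2, THEN conjunct2, THEN conjunct2, THEN conjunct2, THEN conjunct2, THEN conjunct2, THEN conjunct2, THEN conjunct2, THEN conjunct2, THEN conjunct2, THEN conjunct1] by simp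
lemma hid_r: "\<alpha> \<in> arr2 K \<Longrightarrow> a = src1 K (dom2 K \<alpha>) \<Longrightarrow> hcomp K \<alpha> (id2 K (id1 K a)) = \<alpha>"
  using tc[unfolded two_category_def, THEN conjunct2, THEN conjunct2, THEN conjunct2, THEN conjunct2, THEN conjunct2, THEN conjunct2, THEN conjunct2, THEN conjunct2, THEN conjunct2, THEN conjunct2, THEN conjunct2, THEN conjunct2, THEN conjunct1] by simp
lemma hid_comp: "f \<in> arr1 K \<Longrightarrow> g \<in> arr1 K \<Longrightarrow> src1 K g = tgt1 K f \<Longrightarrow> hcomp K (id2 K g) (id2 K f) = id2 K (comp1 K g f)"
  using tc[unfolded two_category_def, THEN conjunct2, THEN conjunct2, THEN conjunct2, THEN conjunct2, THEN conjunct2, THEN conjunct2, THEN conjunct2, THEN conjunct2, THEN conjunct2, THEN conjunct2, THEN conjunct2, THEN conjunct2, THEN conjunct2, THEN conjunct1] by (metis (no_types, lifting))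
lemma interchange: "\<alpha> \<in> arr2 K \<Longrightarrow> \<beta> \<in> arr2 K \<Longrightarrow> \<gamma> \<in> arr2 K \<Longrightarrow> \<delta> \<in> arr2 K \<Longrightarrow>
   dom2 K \<alpha> = cod2 K \<beta> \<Longrightarrow> dom2 K \<gamma> = cod2 K \<delta> \<Longrightarrow> src1 K (dom2 K \<alpha>) = tgt1 K (dom2 K \<gamma>) \<Longrightarrow>
   vcomp K (hcomp K \<alpha> \<gamma>) (hcomp K \<beta> \<delta>) = hcomp K (vcomp K \<alpha> \<beta>) (vcomp K \<gamma> \<delta>)"
  using tc[unfolded two_category_def, THEN conjunct2, THEN conjunct2, THEN conjunct2, THEN conjunct2, THEN conjunct2, THEN conjunct2, THEN conjunct2, THEN conjunct2, THEN conjunct2, THEN conjunct2, THEN conjunct2, THEN conjunct2, THEN conjunct2, THEN conjunct2] by (metis (no_types, lifting))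

lemma wl_vcomp: "x \<in> arr1 K \<Longrightarrow> a \<in> arr2 K \<Longrightarrow> b \<in> arr2 K \<Longrightarrow> dom2 K a = cod2 K b \<Longrightarrow> src1 K x = tgt1 K (dom2 K a) \<Longrightarrow>
  hcomp K (id2 K x) (vcomp K a b) = vcomp K (hcomp K (id2 K x) a) (hcomp K (id2 K x) b)"
  by (subst interchange) (auto simp: vid_l)
lemma wr_vcomp: "x \<in> arr1 K \<Longrightarrow> a \<in> arr2 K \<Longrightarrow> b \<in> arr2 K \<Longrightarrow> dom2 K a = cod2 K b \<Longrightarrow> src1 K (dom2 K a) = tgt1 K x \<Longrightarrow>
  hcomp K (vcomp K a b) (id2 K x) = vcomp K (hcomp K a (id2 K x)) (hcomp K b (id2 K x))"
  by (subst interchange) (auto simp: vid_l)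

end

locale dat = tc K for K :: "('o,'m,'c) twocat" +
  fixes k k' E :: 'o and t' f v :: 'm and \<mu>' \<eta>' \<epsilon> :: 'c
  assumes objs[simp]: "k \<in> obj K" "k' \<in> obj K" "E \<in> obj K"
  and f_typ[simp]: "f \<in> arr1 K" "src1 K f = k" "tgt1 K f = E"
  and v_typ[simp]: "v \<in> arr1 K" "src1 K v = E" "tgt1 K v = k"
  and t'_typ[simp]: "t' \<in> arr1 K" "src1 K t' = k'" "tgt1 K t' = k'"
  and eps_typ[simp]: "\<epsilon> \<in> arr2 K" "dom2 K \<epsilon> = comp1 K f v" "cod2 K \<epsilon> = id1 K E"
  and mu'_typ[simp]: "\<mu>' \<in> arr2 K" "dom2 K \<mu>' = comp1 K t' t'" "cod2 K \<mu>' = t'"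
  and eta'_typ[simp]: "\<eta>' \<in> arr2 K" "dom2 K \<eta>' = id1 K k'" "cod2 K \<eta>' = t'"
  and mon_assoc: "vcomp K \<mu>' (hcomp K \<mu>' (id2 K t')) = vcomp K \<mu>' (hcomp K (id2 K t') \<mu>')"
  and mon_l: "vcomp K \<mu>' (hcomp K \<eta>' (id2 K t')) = id2 K t'"
  and mon_r: "vcomp K \<mu>' (hcomp K (id2 K t') \<eta>') = id2 K t'"
begin

abbreviation I where "I x \<equiv> id2 K x"
abbreviation H where "H a b \<equiv> hcomp K a b"
abbreviation Vc where "Vc a b \<equiv> vcomp K a b"
abbreviation C where "C x y \<equiv> comp1 K x y"
abbreviation E1 where "E1 \<equiv> H (I v) \<epsilon>"
abbreviation mu where "mu \<equiv> H (H (I v) \<epsilon>) (I f)"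

lemma core_eps: "Vc \<epsilon> (H (I (C f v)) \<epsilon>) = Vc \<epsilon> (H \<epsilon> (I (C f v)))"
proof -
  have "H \<epsilon> \<epsilon> = H (Vc \<epsilon> (I (C f v))) (Vc (I (id1 K E)) \<epsilon>)"
    by (simp add: vid_l vid_r)
  also have "\<dots> = Vc (H \<epsilon> (I (id1 K E))) (H (I (C f v)) \<epsilon>)"
    by (subst interchange) simp_all
  also have "\<dots> = Vc \<epsilon> (H (I (C f v)) \<epsilon>)"
    by (simp add: hid_r)
  finally have 1: "H \<epsilon> \<epsilon> = Vc \<epsilon> (H (I (C f v)) \<epsilon>)" .
  have "H \<epsilon> \<epsilon> = H (Vc (I (id1 K E)) \<epsilon>) (Vc \<epsilon> (I (C f v)))"
    by (simp add: vid_l vid_r)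
  also have "\<dots> = Vc (H (I (id1 K E)) \<epsilon>) (H \<epsilon> (I (C f v)))"
    by (subst interchange) simp_all
  also have "\<dots> = Vc \<epsilon> (H \<epsilon> (I (C f v)))"
    by (simp add: hid_l)
  finally show ?thesis using 1 by simp
qed


lemma core_v: "Vc E1 (H (I (C v f)) E1) = Vc E1 (H mu (I v))"
proof -
  have a: "H (I (C v f)) E1 = H (I v) (H (I (C f v)) \<epsilon>)"
  proof -
    have "H (I (C v f)) E1 = H (H (I v) (I f)) E1" by (simp add: hid_comp)
    also have "\<dots> = H (I v) (H (I f) E1)" by (subst hassoc) simp_all
    also have "H (I f) E1 = H (H (I f) (I v)) \<epsilon>" by (subst hassoc) simp_all
    also have "\<dots> = H (I (C f v)) \<epsilon>" by (simp add: hid_comp)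
    finally show ?thesis .
  qed
  have b: "H mu (I v) = H (I v) (H \<epsilon> (I (C f v)))"
  proof -
    have "H mu (I v) = H (H (I v) \<epsilon>) (H (I f) (I v))" by (subst hassoc) simp_all
    also have "\<dots> = H (H (I v) \<epsilon>) (I (C f v))" by (simp add: hid_comp)
    also have "\<dots> = H (I v) (H \<epsilon> (I (C f v)))" by (subst hassoc) simp_all
    finally show ?thesis .
  qed
  have "Vc E1 (H (I (C v f)) E1) = H (I v) (Vc \<epsilon> (H (I (C f v)) \<epsilon>))"
    unfolding a by (subst wl_vcomp) simp_all
  also have "\<dots> = H (I v) (Vc \<epsilon> (H \<epsilon> (I (C f v))))" by (simp only: core_eps)
  also have "\<dots> = Vc E1 (H mu (I v))"
    unfolding b by (subst wl_vcomp) simp_all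
  finally show ?thesis .
qed


lemma key:
  assumes X[simp]: "X \<in> arr1 K" "src1 K X = k" "tgt1 K X = k'"
    and Y[simp]: "Y \<in> arr1 K" "src1 K Y = k" "tgt1 K Y = k'"
    and g[simp]: "\<gamma> \<in> arr2 K" "dom2 K \<gamma> = Y" "cod2 K \<gamma> = C X (C v f)"
  shows "Vc (H (I (C X v)) \<epsilon>) (Vc (H \<gamma> (I v)) (H (I (C Y v)) \<epsilon>))
       = Vc (H (I (C X v)) \<epsilon>) (H (Vc (H (I X) mu) (H \<gamma> (I (C v f)))) (I v))"
proof -
  define G where "G = H \<gamma> (I (C v (C f v)))"
  have Gt[simp]: "G \<in> arr2 K" "dom2 K G = C Y (C v (C f v))" "cod2 K G = C X (C v (C f (C v (C f v))))"
    unfolding G_def by simp_all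
  have s1: "\<And>Z. Z \<in> arr1 K \<Longrightarrow> src1 K Z = k \<Longrightarrow> H (I (C Z v)) \<epsilon> = H (I Z) E1"
    by (subst hassoc[symmetric]) (simp_all add: hid_comp)
  have s2: "Vc (H \<gamma> (I v)) (H (I Y) E1) = H \<gamma> E1"
    by (subst interchange) (simp_all add: vid_l vid_r)
  have s3: "Vc (H (I (C X (C v f))) E1) G = H \<gamma> E1"
    unfolding G_def by (subst interchange) (simp_all add: vid_l vid_r)
  have s4: "H (I (C X (C v f))) E1 = H (I X) (H (I (C v f)) E1)"
    by (subst hassoc[symmetric]) (simp_all add: hid_comp)
  have "Vc (H (I (C X v)) \<epsilon>) (Vc (H \<gamma> (I v)) (H (I (C Y v)) \<epsilon>))
      = Vc (H (I X) E1) (Vc (H (I X) (H (I (C v f)) E1)) G)"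
    by (simp only: s1 X Y v_typ s2 s3[symmetric] s4)
  also have "\<dots> = Vc (Vc (H (I X) E1) (H (I X) (H (I (C v f)) E1))) G"
    by (subst vassoc) simp_all
  also have "Vc (H (I X) E1) (H (I X) (H (I (C v f)) E1)) = H (I X) (Vc E1 (H (I (C v f)) E1))"
    by (subst wl_vcomp) simp_all
  also have "\<dots> = H (I X) (Vc E1 (H mu (I v)))" by (simp only: core_v)
  also have "\<dots> = Vc (H (I X) E1) (H (I X) (H mu (I v)))"
    by (subst wl_vcomp) simp_all
  also have "Vc (Vc (H (I X) E1) (H (I X) (H mu (I v)))) G = Vc (H (I X) E1) (Vc (H (I X) (H mu (I v))) G)"
    by (subst vassoc) simp_all
  also have "H (I X) (H mu (I v)) = H (H (I X) mu) (I v)"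
    by (subst hassoc) simp_all
  also have "G = H (H \<gamma> (I (C v f))) (I v)"
    unfolding G_def by (subst hassoc) (simp_all add: hid_comp)
  also have "Vc (H (H (I X) mu) (I v)) (H (H \<gamma> (I (C v f))) (I v)) = H (Vc (H (I X) mu) (H \<gamma> (I (C v f)))) (I v)"
    by (subst wr_vcomp) simp_all
  finally show ?thesis by (simp only: s1 X v_typ)
qed


lemma alg_mult:
  assumes X[simp]: "X \<in> arr1 K" "src1 K X = k" "tgt1 K X = k'"
    and ch[simp]: "\<chi> \<in> arr2 K" "dom2 K \<chi> = C t' X" "cod2 K \<chi> = C X (C v f)"
    and ax: "Vc (H (I X) mu) (Vc (H \<chi> (I (C v f))) (H (I t') \<chi>)) = Vc \<chi> (H \<mu>' (I X))"
  shows "Vc (Vc (H (I (C X v)) \<epsilon>) (H \<chi> (I v))) (H (I t') (Vc (H (I (C X v)) \<epsilon>) (H \<chi> (I v))))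
       = Vc (Vc (H (I (C X v)) \<epsilon>) (H \<chi> (I v))) (H \<mu>' (I (C X v)))"
proof -
  define Ex where "Ex = H (I (C X v)) \<epsilon>"
  define P where "P = H \<chi> (I v)"
  define Q where "Q = H (I (C (C t' X) v)) \<epsilon>"
  define R where "R = H (H (I t') \<chi>) (I v)"
  define A where "A = H (I X) mu"
  define B where "B = H \<chi> (I (C v f))"
  have T[simp]: "Ex \<in> arr2 K" "dom2 K Ex = C X (C v (C f v))" "cod2 K Ex = C X v"
     "P \<in> arr2 K" "dom2 K P = C t' (C X v)" "cod2 K P = C X (C v (C f v))"
     "Q \<in> arr2 K" "dom2 K Q = C t' (C X (C v (C f v)))" "cod2 K Q = C t' (C X v)"
     "R \<in> arr2 K" "dom2 K R = C t' (C t' (C X v))" "cod2 K R = C t' (C X (C v (C f v)))"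
     "A \<in> arr2 K" "dom2 K A = C X (C v (C f (C v f)))" "cod2 K A = C X (C v f)"
     "B \<in> arr2 K" "dom2 K B = C t' (C X (C v f))" "cod2 K B = C X (C v (C f (C v f)))"
    unfolding Ex_def P_def Q_def R_def A_def B_def by simp_all
  have k: "Vc Ex (Vc P Q) = Vc Ex (H (Vc A B) (I v))"
    unfolding Ex_def P_def Q_def A_def B_def by (rule key) simp_all
  have s1: "H (I t') (Vc Ex P) = Vc Q R"
  proof -
    have "H (I t') (Vc Ex P) = Vc (H (I t') Ex) (H (I t') P)" by (subst wl_vcomp) simp_all
    also have "H (I t') Ex = Q" unfolding Ex_def Q_def
      by (subst hassoc[symmetric]) (simp_all add: hid_comp)
    also have "H (I t') P = R" unfolding P_def R_def by (subst hassoc) simp_all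
    finally show ?thesis .
  qed
  have "Vc (Vc Ex P) (H (I t') (Vc Ex P)) = Vc (Vc Ex P) (Vc Q R)" by (simp only: s1)
  also have "\<dots> = Vc Ex (Vc P (Vc Q R))" by (subst vassoc) simp_all
  also have "Vc P (Vc Q R) = Vc (Vc P Q) R" by (subst vassoc) simp_all
  also have "Vc Ex (Vc (Vc P Q) R) = Vc (Vc Ex (Vc P Q)) R" by (subst vassoc) simp_all
  also note k
  also have "Vc (Vc Ex (H (Vc A B) (I v))) R = Vc Ex (Vc (H (Vc A B) (I v)) R)" by (subst vassoc) simp_all
  also have "Vc (H (Vc A B) (I v)) R = H (Vc (Vc A B) (H (I t') \<chi>)) (I v)"
    unfolding R_def by (subst wr_vcomp) simp_all
  also have "Vc (Vc A B) (H (I t') \<chi>) = Vc \<chi> (H \<mu>' (I X))"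
    unfolding A_def B_def by (subst vassoc) (simp_all add: ax)
  also have "H (Vc \<chi> (H \<mu>' (I X))) (I v) = Vc P (H (H \<mu>' (I X)) (I v))"
    unfolding P_def by (subst wr_vcomp) simp_all
  also have "H (H \<mu>' (I X)) (I v) = H \<mu>' (I (C X v))"
    by (subst hassoc) (simp_all add: hid_comp)
  also have "Vc Ex (Vc P (H \<mu>' (I (C X v)))) = Vc (Vc Ex P) (H \<mu>' (I (C X v)))"
    by (subst vassoc) simp_all
  finally show ?thesis unfolding Ex_def P_def .
qed


lemma alg_unit:
  assumes X[simp]: "X \<in> arr1 K" "src1 K X = k" "tgt1 K X = k'"
    and ch[simp]: "\<chi> \<in> arr2 K" "dom2 K \<chi> = C t' X" "cod2 K \<chi> = C X (C v f)"
    and ax: "Vc (H (I X) mu) (Vc (H \<chi> (I (C v f))) (H (I t') \<chi>)) = Vc \<chi> (H \<mu>' (I X))"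
  shows "Vc (Vc (H (I (C X v)) \<epsilon>) (Vc (H \<chi> (I v)) (H \<eta>' (I (C X v))))) (Vc (H (I (C X v)) \<epsilon>) (H \<chi> (I v)))
       = Vc (H (I (C X v)) \<epsilon>) (H \<chi> (I v))"
    and "Vc (Vc (H (I (C X v)) \<epsilon>) (H \<chi> (I v))) (H (I t') (Vc (H (I (C X v)) \<epsilon>) (Vc (H \<chi> (I v)) (H \<eta>' (I (C X v))))))
       = Vc (H (I (C X v)) \<epsilon>) (H \<chi> (I v))"
proof -
  define Ex where "Ex = H (I (C X v)) \<epsilon>"
  define P where "P = H \<chi> (I v)"
  define N where "N = H \<eta>' (I (C X v))"
  define \<alpha> where "\<alpha> = Vc Ex P"
  have T[simp]: "Ex \<in> arr2 K" "dom2 K Ex = C X (C v (C f v))" "cod2 K Ex = C X v"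
     "P \<in> arr2 K" "dom2 K P = C t' (C X v)" "cod2 K P = C X (C v (C f v))"
     "N \<in> arr2 K" "dom2 K N = C X v" "cod2 K N = C t' (C X v)"
     "\<alpha> \<in> arr2 K" "dom2 K \<alpha> = C t' (C X v)" "cod2 K \<alpha> = C X v"
    unfolding Ex_def P_def N_def \<alpha>_def by simp_all
  have m: "Vc \<alpha> (H (I t') \<alpha>) = Vc \<alpha> (H \<mu>' (I (C X v)))"
    unfolding \<alpha>_def Ex_def P_def by (rule alg_mult[OF X ch ax])
  have e: "Vc Ex (Vc P N) = Vc \<alpha> N" unfolding \<alpha>_def by (subst vassoc) simp_all
  have nat: "Vc N \<alpha> = Vc (H (I t') \<alpha>) (H \<eta>' (I (C t' (C X v))))"
  proof -
    have "Vc N \<alpha> = Vc (H \<eta>' (I (C X v))) (H (I (id1 K k')) \<alpha>)"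
      unfolding N_def by (simp add: hid_l)
    also have "\<dots> = H \<eta>' \<alpha>" by (subst interchange) (simp_all add: vid_l vid_r)
    also have "\<dots> = Vc (H (I t') \<alpha>) (H \<eta>' (I (C t' (C X v))))"
      by (subst interchange) (simp_all add: vid_l vid_r)
    finally show ?thesis .
  qed
  have u1: "Vc (H \<mu>' (I (C X v))) (H \<eta>' (I (C t' (C X v)))) = I (C t' (C X v))"
  proof -
    have "H \<eta>' (I (C t' (C X v))) = H (H \<eta>' (I t')) (I (C X v))"
      by (subst hassoc) (simp_all add: hid_comp)
    moreover have "Vc (H \<mu>' (I (C X v))) (H (H \<eta>' (I t')) (I (C X v))) = H (Vc \<mu>' (H \<eta>' (I t'))) (I (C X v))"
      by (subst wr_vcomp) simp_all
    ultimately show ?thesis by (simp add: mon_l hid_comp)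
  qed
  have u2: "Vc (H \<mu>' (I (C X v))) (H (I t') N) = I (C t' (C X v))"
  proof -
    have "H (I t') N = H (H (I t') \<eta>') (I (C X v))"
      unfolding N_def by (subst hassoc) simp_all
    moreover have "Vc (H \<mu>' (I (C X v))) (H (H (I t') \<eta>') (I (C X v))) = H (Vc \<mu>' (H (I t') \<eta>')) (I (C X v))"
      by (subst wr_vcomp) simp_all
    ultimately show ?thesis by (simp add: mon_r hid_comp)
  qed
  have "Vc (Vc \<alpha> N) \<alpha> = Vc \<alpha> (Vc (H (I t') \<alpha>) (H \<eta>' (I (C t' (C X v)))))"
    by (subst vassoc) (simp_all add: nat)
  also have "\<dots> = Vc (Vc \<alpha> (H (I t') \<alpha>)) (H \<eta>' (I (C t' (C X v))))"
    by (subst vassoc) simp_all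
  also note m
  also have "Vc (Vc \<alpha> (H \<mu>' (I (C X v)))) (H \<eta>' (I (C t' (C X v)))) = \<alpha>"
    by (subst vassoc) (simp_all add: u1 vid_r)
  finally show "Vc (Vc Ex (Vc P N)) (Vc Ex P) = Vc Ex P" unfolding e \<alpha>_def .
  have "Vc \<alpha> (H (I t') (Vc \<alpha> N)) = Vc \<alpha> (Vc (H (I t') \<alpha>) (H (I t') N))"
    by (subst wl_vcomp) simp_all
  also have "\<dots> = Vc (Vc \<alpha> (H (I t') \<alpha>)) (H (I t') N)"
    by (subst vassoc) simp_all
  also note m
  also have "Vc (Vc \<alpha> (H \<mu>' (I (C X v)))) (H (I t') N) = \<alpha>"
    by (subst vassoc) (simp_all add: u2 vid_r)
  finally show "Vc (Vc Ex P) (H (I t') (Vc Ex (Vc P N))) = Vc Ex P" unfolding e \<alpha>_def .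
qed


lemma vctx: "Vc a b = c \<Longrightarrow> a \<in> arr2 K \<Longrightarrow> b \<in> arr2 K \<Longrightarrow> r \<in> arr2 K \<Longrightarrow>
   dom2 K a = cod2 K b \<Longrightarrow> dom2 K b = cod2 K r \<Longrightarrow> Vc a (Vc b r) = Vc c r"
  by (subst vassoc[symmetric]) simp_all

lemma main:
  assumes V[simp]: "V \<in> arr1 K" "src1 K V = k" "tgt1 K V = k'"
    and W[simp]: "W \<in> arr1 K" "src1 K W = k" "tgt1 K W = k'"
    and psi[simp]: "\<psi> \<in> arr2 K" "dom2 K \<psi> = C t' V" "cod2 K \<psi> = C V (C v f)"
    and phi[simp]: "\<phi> \<in> arr2 K" "dom2 K \<phi> = C t' W" "cod2 K \<phi> = C W (C v f)"
    and axV: "Vc (H (I V) mu) (Vc (H \<psi> (I (C v f))) (H (I t') \<psi>)) = Vc \<psi> (H \<mu>' (I V))"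
    and axW: "Vc (H (I W) mu) (Vc (H \<phi> (I (C v f))) (H (I t') \<phi>)) = Vc \<phi> (H \<mu>' (I W))"
    and rho[simp]: "\<rho> \<in> arr2 K" "dom2 K \<rho> = V" "cod2 K \<rho> = C W (C v f)"
    and axR: "Vc (H (I W) mu) (Vc (H \<rho> (I (C v f))) \<psi>) = Vc (H (I W) mu) (Vc (H \<phi> (I (C v f))) (H (I t') \<rho>))"
    and VT[simp]: "VT \<in> arr1 K" "src1 K VT = E" "tgt1 K VT = k'"
    and WT[simp]: "WT \<in> arr1 K" "src1 K WT = E" "tgt1 K WT = k'"
    and piV[simp]: "\<pi>V \<in> arr2 K" "dom2 K \<pi>V = C V v" "cod2 K \<pi>V = VT"
    and iV[simp]: "\<iota>V \<in> arr2 K" "dom2 K \<iota>V = VT" "cod2 K \<iota>V = C V v"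
    and piW[simp]: "\<pi>W \<in> arr2 K" "dom2 K \<pi>W = C W v" "cod2 K \<pi>W = WT"
    and iW[simp]: "\<iota>W \<in> arr2 K" "dom2 K \<iota>W = WT" "cod2 K \<iota>W = C W v"
    and splV: "Vc \<iota>V \<pi>V = Vc (H (I (C V v)) \<epsilon>) (Vc (H \<psi> (I v)) (H \<eta>' (I (C V v))))"
    and splW: "Vc \<iota>W \<pi>W = Vc (H (I (C W v)) \<epsilon>) (Vc (H \<phi> (I v)) (H \<eta>' (I (C W v))))"
  shows "Vc (Vc \<pi>W (Vc (H (I (C W v)) \<epsilon>) (Vc (H \<phi> (I v)) (H (I t') \<iota>W))))
            (H (I t') (Vc \<pi>W (Vc (H (I (C W v)) \<epsilon>) (Vc (H \<rho> (I v)) \<iota>V))))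
       = Vc (Vc \<pi>W (Vc (H (I (C W v)) \<epsilon>) (Vc (H \<rho> (I v)) \<iota>V)))
            (Vc \<pi>V (Vc (H (I (C V v)) \<epsilon>) (Vc (H \<psi> (I v)) (H (I t') \<iota>V))))"
proof -
  define ExV where "ExV = H (I (C V v)) \<epsilon>"
  define ExW where "ExW = H (I (C W v)) \<epsilon>"
  define PV where "PV = H \<psi> (I v)"
  define PW where "PW = H \<phi> (I v)"
  define NV where "NV = H \<eta>' (I (C V v))"
  define NW where "NW = H \<eta>' (I (C W v))"
  define R where "R = H \<rho> (I v)"
  define T where "T = H (I t') \<iota>V"
  define A where "A = H (I W) mu"
  define M1 where "M1 = Vc (Vc A (H \<rho> (I (C v f)))) \<psi>"
  define M2 where "M2 = Vc (Vc A (H \<phi> (I (C v f)))) (H (I t') \<rho>)"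
  have Ty[simp]: "ExV \<in> arr2 K" "dom2 K ExV = C V (C v (C f v))" "cod2 K ExV = C V v"
     "ExW \<in> arr2 K" "dom2 K ExW = C W (C v (C f v))" "cod2 K ExW = C W v"
     "PV \<in> arr2 K" "dom2 K PV = C t' (C V v)" "cod2 K PV = C V (C v (C f v))"
     "PW \<in> arr2 K" "dom2 K PW = C t' (C W v)" "cod2 K PW = C W (C v (C f v))"
     "NV \<in> arr2 K" "dom2 K NV = C V v" "cod2 K NV = C t' (C V v)"
     "NW \<in> arr2 K" "dom2 K NW = C W v" "cod2 K NW = C t' (C W v)"
     "R \<in> arr2 K" "dom2 K R = C V v" "cod2 K R = C W (C v (C f v))"
     "T \<in> arr2 K" "dom2 K T = C t' VT" "cod2 K T = C t' (C V v)"
     "A \<in> arr2 K" "dom2 K A = C W (C v (C f (C v f)))" "cod2 K A = C W (C v f)"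
     "M1 \<in> arr2 K" "dom2 K M1 = C t' V" "cod2 K M1 = C W (C v f)"
     "M2 \<in> arr2 K" "dom2 K M2 = C t' V" "cod2 K M2 = C W (C v f)"
    unfolding ExV_def ExW_def PV_def PW_def NV_def NW_def R_def T_def A_def M1_def M2_def by simp_all
  have M12: "M1 = M2" unfolding M1_def M2_def A_def
    by (subst (1 2) vassoc) (simp_all add: axR)
  have L: "Vc (Vc \<pi>W (Vc ExW (Vc R \<iota>V))) (Vc \<pi>V (Vc ExV (Vc PV T)))
        = Vc \<pi>W (Vc ExW (Vc (H M1 (I v)) T))"
  proof -
    have "Vc (Vc \<pi>W (Vc ExW (Vc R \<iota>V))) (Vc \<pi>V (Vc ExV (Vc PV T)))
        = Vc \<pi>W (Vc ExW (Vc R (Vc \<iota>V (Vc \<pi>V (Vc ExV (Vc PV T))))))"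
      by (simp add: vassoc)
    also have "Vc \<iota>V (Vc \<pi>V (Vc ExV (Vc PV T))) = Vc (Vc ExV (Vc PV NV)) (Vc ExV (Vc PV T))"
      by (rule vctx) (simp_all add: splV ExV_def PV_def NV_def)
    also have "\<dots> = Vc (Vc ExV PV) T"
    proof -
      have "Vc ExV (Vc PV T) = Vc (Vc ExV PV) T" by (simp add: vassoc)
      hence "Vc (Vc ExV (Vc PV NV)) (Vc ExV (Vc PV T)) = Vc (Vc ExV (Vc PV NV)) (Vc (Vc ExV PV) T)" by simp
      also have "\<dots> = Vc (Vc ExV PV) T"
        by (rule vctx) (simp_all add: ExV_def PV_def NV_def alg_unit(1)[OF V psi axV])
      finally show ?thesis .
    qed
    also have "Vc R (Vc (Vc ExV PV) T) = Vc R (Vc ExV (Vc PV T))" by (simp add: vassoc)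
    also have "Vc ExW (Vc R (Vc ExV (Vc PV T))) = Vc (Vc ExW (Vc R ExV)) (Vc PV T)"
      by (simp add: vassoc)
    also have "Vc ExW (Vc R ExV) = Vc ExW (H (Vc A (H \<rho> (I (C v f)))) (I v))"
      unfolding ExW_def R_def ExV_def A_def by (rule key) simp_all
    also have "Vc (Vc ExW (H (Vc A (H \<rho> (I (C v f)))) (I v))) (Vc PV T)
         = Vc ExW (Vc (Vc (H (Vc A (H \<rho> (I (C v f)))) (I v)) PV) T)"
      by (simp add: vassoc)
    also have "Vc (H (Vc A (H \<rho> (I (C v f)))) (I v)) PV = H M1 (I v)"
      unfolding PV_def M1_def by (subst wr_vcomp) simp_all
    finally show ?thesis .
  qed
  define Q where "Q = H (I (C t' (C W v))) \<epsilon>"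
  define tR where "tR = H (H (I t') \<rho>) (I v)"
  define eW where "eW = Vc ExW (Vc PW NW)"
  define B2 where "B2 = Vc A (H \<phi> (I (C v f)))"
  have Ty2[simp]: "Q \<in> arr2 K" "dom2 K Q = C t' (C W (C v (C f v)))" "cod2 K Q = C t' (C W v)"
     "tR \<in> arr2 K" "dom2 K tR = C t' (C V v)" "cod2 K tR = C t' (C W (C v (C f v)))"
     "eW \<in> arr2 K" "dom2 K eW = C W v" "cod2 K eW = C W v"
     "B2 \<in> arr2 K" "dom2 K B2 = C t' (C W (C v f))" "cod2 K B2 = C W (C v f)"
    unfolding Q_def tR_def eW_def ExW_def PW_def NW_def B2_def A_def by simp_all
  have tQ: "H (I t') ExW = Q" unfolding ExW_def Q_def
    by (subst hassoc[symmetric]) (simp_all add: hid_comp)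
  have tRe: "H (I t') R = tR" unfolding R_def tR_def by (subst hassoc) simp_all
  have te: "Vc (H (I t') \<iota>W) (H (I t') \<pi>W) = H (I t') eW"
    unfolding eW_def by (subst wl_vcomp[symmetric]) (simp_all add: splW ExW_def PW_def NW_def)
  have a3: "Vc (Vc ExW PW) (H (I t') eW) = Vc ExW PW"
    unfolding eW_def ExW_def PW_def NW_def by (rule alg_unit(2)[OF W phi axW])
  have kq: "Vc ExW (Vc PW Q) = Vc ExW (H B2 (I v))"
    using key[of W "C t' W" \<phi>] unfolding ExW_def PW_def Q_def B2_def A_def by simp
  have m2: "Vc (H B2 (I v)) tR = H M2 (I v)"
    unfolding tR_def M2_def B2_def by (subst wr_vcomp) simp_all
  have "Vc (Vc \<pi>W (Vc ExW (Vc PW (H (I t') \<iota>W)))) (H (I t') (Vc \<pi>W (Vc ExW (Vc R \<iota>V))))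
      = Vc \<pi>W (Vc ExW (Vc PW (Vc (H (I t') \<iota>W) (Vc (H (I t') \<pi>W) (Vc Q (Vc tR T))))))"
    by (simp add: wl_vcomp vassoc tQ tRe T_def)
  also have "Vc (H (I t') \<iota>W) (Vc (H (I t') \<pi>W) (Vc Q (Vc tR T))) = Vc (H (I t') eW) (Vc Q (Vc tR T))"
    by (rule vctx[OF te]) simp_all
  also have "Vc ExW (Vc PW (Vc (H (I t') eW) (Vc Q (Vc tR T)))) = Vc ExW (Vc PW (Vc Q (Vc tR T)))"
  proof -
    have "Vc ExW (Vc PW (Vc (H (I t') eW) (Vc Q (Vc tR T)))) = Vc (Vc ExW PW) (Vc (H (I t') eW) (Vc Q (Vc tR T)))"
      by (subst vassoc) simp_all
    also have "\<dots> = Vc (Vc ExW PW) (Vc Q (Vc tR T))"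
      by (rule vctx[OF a3]) simp_all
    also have "\<dots> = Vc ExW (Vc PW (Vc Q (Vc tR T)))" by (subst vassoc) simp_all
    finally show ?thesis .
  qed
  also have "Vc ExW (Vc PW (Vc Q (Vc tR T))) = Vc ExW (Vc (H B2 (I v)) (Vc tR T))"
  proof -
    have "Vc ExW (Vc PW (Vc Q (Vc tR T))) = Vc ExW (Vc (Vc PW Q) (Vc tR T))"
      by (simp add: vassoc)
    also have "\<dots> = Vc (Vc ExW (Vc PW Q)) (Vc tR T)" by (subst vassoc) simp_all
    also note kq
    also have "Vc (Vc ExW (H B2 (I v))) (Vc tR T) = Vc ExW (Vc (H B2 (I v)) (Vc tR T))"
      by (subst vassoc) simp_all
    finally show ?thesis .
  qed
  also have "Vc (H B2 (I v)) (Vc tR T) = Vc (H M2 (I v)) T"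
    by (rule vctx[OF m2]) simp_all
  finally have Rt: "Vc (Vc \<pi>W (Vc ExW (Vc PW (H (I t') \<iota>W)))) (H (I t') (Vc \<pi>W (Vc ExW (Vc R \<iota>V))))
      = Vc \<pi>W (Vc ExW (Vc (H M2 (I v)) T))" .
  show ?thesis using L Rt M12
    unfolding ExV_def ExW_def PV_def PW_def R_def T_def by simp
qed

end

theorem lemma3p4:
  fixes K :: "('o, 'm, 'c) twocat"
    and k k' E :: 'o
    and t t' f v V W VT WT :: 'm
    and \<mu> \<eta> \<mu>' \<eta>' \<epsilon> \<psi> \<phi> \<rho> \<pi>V \<iota>V \<pi>W \<iota>W :: 'c
  assumes "two_category K"
    and "admits_EM K"
    and "idempotents_split K"
    and "monad K k t \<mu> \<eta>"
    and "monad K k' t' \<mu>' \<eta>'"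
    and "em_object K k t \<mu> \<eta> E f v \<epsilon>"
    and "emw_1cell K k t \<mu> k' t' \<mu>' V \<psi>"
    and "emw_1cell K k t \<mu> k' t' \<mu>' W \<phi>"
    and "emw_2cell K t \<mu> t' \<eta>' V \<psi> W \<phi> \<rho>"
    and "hom2 K \<pi>V (comp1 K V v) VT" and "hom2 K \<iota>V VT (comp1 K V v)"
    and "vcomp K \<iota>V \<pi>V = tilde_idem K \<eta>' v \<epsilon> V \<psi>" and "vcomp K \<pi>V \<iota>V = id2 K VT"
    and "hom2 K \<pi>W (comp1 K W v) WT" and "hom2 K \<iota>W WT (comp1 K W v)"
    and "vcomp K \<iota>W \<pi>W = tilde_idem K \<eta>' v \<epsilon> W \<phi>" and "vcomp K \<pi>W \<iota>W = id2 K WT"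
  shows "em_2cell K t' VT
           (vcomp K \<pi>V (vcomp K (wl K (comp1 K V v) \<epsilon>) (vcomp K (wr K \<psi> v) (wl K t' \<iota>V))))
           WT
           (vcomp K \<pi>W (vcomp K (wl K (comp1 K W v) \<epsilon>) (vcomp K (wr K \<phi> v) (wl K t' \<iota>W))))
           (vcomp K \<pi>W (vcomp K (wl K (comp1 K W v) \<epsilon>) (vcomp K (wr K \<rho> v) \<iota>V)))"
  proof -
  note A = assms
  interpret tc K by unfold_locales (rule A(1))
  have k: "k \<in> obj K" using A(4) unfolding monad_def by blast
  from A(5) have m5: "k' \<in> obj K" "t' \<in> arr1 K" "src1 K t' = k'" "tgt1 K t' = k'"
    "\<mu>' \<in> arr2 K" "dom2 K \<mu>' = comp1 K t' t'" "cod2 K \<mu>' = t'"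
    "\<eta>' \<in> arr2 K" "dom2 K \<eta>' = id1 K k'" "cod2 K \<eta>' = t'"
    "vcomp K \<mu>' (hcomp K \<mu>' (id2 K t')) = vcomp K \<mu>' (hcomp K (id2 K t') \<mu>')"
    "vcomp K \<mu>' (hcomp K \<eta>' (id2 K t')) = id2 K t'"
    "vcomp K \<mu>' (hcomp K (id2 K t') \<eta>') = id2 K t'"
    unfolding monad_def hom1_def hom2_def wl_def wr_def by auto
  from A(6) have m6: "E \<in> obj K" "f \<in> arr1 K" "src1 K f = k" "tgt1 K f = E"
    "v \<in> arr1 K" "src1 K v = E" "tgt1 K v = k"
    "\<epsilon> \<in> arr2 K" "dom2 K \<epsilon> = comp1 K f v" "cod2 K \<epsilon> = id1 K E"
    and tdef: "t = comp1 K v f" and mudef: "\<mu> = hcomp K (hcomp K (id2 K v) \<epsilon>) (id2 K f)"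
    unfolding em_object_def hom1_def hom2_def wl_def wr_def by auto
  interpret dat K k k' E t' f v \<mu>' \<eta>' \<epsilon>
    by unfold_locales (simp_all add: k m5 m6)
  from A(7) have V: "V \<in> arr1 K" "src1 K V = k" "tgt1 K V = k'"
    and psi: "\<psi> \<in> arr2 K" "dom2 K \<psi> = C t' V" "cod2 K \<psi> = C V (C v f)"
    and axV: "Vc (H (I V) mu) (Vc (H \<psi> (I (C v f))) (H (I t') \<psi>)) = Vc \<psi> (H \<mu>' (I V))"
    unfolding emw_1cell_def hom1_def hom2_def wl_def wr_def tdef mudef by auto
  from A(8) have W: "W \<in> arr1 K" "src1 K W = k" "tgt1 K W = k'"
    and phi: "\<phi> \<in> arr2 K" "dom2 K \<phi> = C t' W" "cod2 K \<phi> = C W (C v f)"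
    and axW: "Vc (H (I W) mu) (Vc (H \<phi> (I (C v f))) (H (I t') \<phi>)) = Vc \<phi> (H \<mu>' (I W))"
    unfolding emw_1cell_def hom1_def hom2_def wl_def wr_def tdef mudef by auto
  from A(9) have rho: "\<rho> \<in> arr2 K" "dom2 K \<rho> = V" "cod2 K \<rho> = C W (C v f)"
    and axR: "Vc (H (I W) mu) (Vc (H \<rho> (I (C v f))) \<psi>) = Vc (H (I W) mu) (Vc (H \<phi> (I (C v f))) (H (I t') \<rho>))"
    unfolding emw_2cell_def hom2_def wl_def wr_def tdef mudef by auto
  have piV: "\<pi>V \<in> arr2 K" "dom2 K \<pi>V = C V v" "cod2 K \<pi>V = VT"
    and iV: "\<iota>V \<in> arr2 K" "dom2 K \<iota>V = VT" "cod2 K \<iota>V = C V v"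
    and piW: "\<pi>W \<in> arr2 K" "dom2 K \<pi>W = C W v" "cod2 K \<pi>W = WT"
    and iW: "\<iota>W \<in> arr2 K" "dom2 K \<iota>W = WT" "cod2 K \<iota>W = C W v"
    using A(10,11,14,15) unfolding hom2_def by auto
  have VT: "VT \<in> arr1 K" "src1 K VT = E" "tgt1 K VT = k'"
    using cod2_arr[OF piV(1)] src_cod[OF piV(1)] tgt_cod[OF piV(1)] piV V by simp_all
  have WT: "WT \<in> arr1 K" "src1 K WT = E" "tgt1 K WT = k'"
    using cod2_arr[OF piW(1)] src_cod[OF piW(1)] tgt_cod[OF piW(1)] piW W by simp_all
  have splV: "Vc \<iota>V \<pi>V = Vc (H (I (C V v)) \<epsilon>) (Vc (H \<psi> (I v)) (H \<eta>' (I (C V v))))"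
    using A(12) unfolding tilde_idem_def wl_def wr_def .
  have splW: "Vc \<iota>W \<pi>W = Vc (H (I (C W v)) \<epsilon>) (Vc (H \<phi> (I v)) (H \<eta>' (I (C W v))))"
    using A(16) unfolding tilde_idem_def wl_def wr_def .
  have eq: "Vc (Vc \<pi>W (Vc (H (I (C W v)) \<epsilon>) (Vc (H \<phi> (I v)) (H (I t') \<iota>W))))
            (H (I t') (Vc \<pi>W (Vc (H (I (C W v)) \<epsilon>) (Vc (H \<rho> (I v)) \<iota>V))))
       = Vc (Vc \<pi>W (Vc (H (I (C W v)) \<epsilon>) (Vc (H \<rho> (I v)) \<iota>V)))
            (Vc \<pi>V (Vc (H (I (C V v)) \<epsilon>) (Vc (H \<psi> (I v)) (H (I t') \<iota>V))))"
    by (rule main[OF V W psi phi axV axW rho axR VT WT piV iV piW iW splV splW])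
  have ty: "hom2 K (Vc \<pi>W (Vc (H (I (C W v)) \<epsilon>) (Vc (H \<rho> (I v)) \<iota>V))) VT WT"
    unfolding hom2_def using V W rho VT WT piV iV piW iW by simp
  show ?thesis unfolding em_2cell_def wl_def wr_def using eq ty by simp
qed

end
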